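(* Let $d\ge3$, $\Lambda\subset\mathbb R^d$ bounded, $\beta>0$, $0<z\le1$, $\varepsilon\in\{+1,-1\}$, and $U:\mathbb R^d\to[0,\infty)$ integrable with $U(-x)=U(x)$. Let $\mathbb A$ be the set of triples $\boldsymbol\omega=(\ell,x,\omega)$ with $\ell\ge1$ an integer, $x\in\Lambda$, and $\omega:[0,\ell\beta]\to\mathbb R^d$ a continuous path with $\omega(0)=\omega(\ell\beta)=x$, equipped with the complex measure $$d\mu(\boldsymbol\omega)=\frac{z^\ell\varepsilon^{\ell+1}}{\ell}\,dx\,dW^{\ell\beta}_{xx}(\omega)\,\chi_\Lambda(\omega)\prod_{0\le m<n\le\ell-1}\exp\Big\{-\int_0^\beta U\big(\omega(m\beta+t)-\omega(n\beta+t)\big)dt\Big\},$$ and let $$\zeta(\boldsymbol\omega,\boldsymbol\omega')=\exp\Big\{-\sum_{m=0}^{\ell-1}\sum_{n=0}^{\ell'-1}\int_0^\beta U\big(\omega(m\beta+t)-\omega'(n\beta+t)\big)dt\Big\}-1.$$ If $$\frac{\beta}{(2\pi\beta)^{d/2}}\int_{\mathbb R^d}U(x)\,dx\sum_{\ell\ge1}\ell^{-d/2}\le-\log z,$$ then $a(\boldsymbol\omega)=(-\log z)\ell$ satisfies, for all $\boldsymbol\omega=(\ell,x,\omega)\in\mathbb A$, $$\int d|\mu|(\boldsymbol\omega')\,|\zeta(\boldsymbol\omega,\boldsymbol\omega')|\,e^{a(\boldsymbol\omega')}\le a(\boldsymbol\omega).$$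
   Context: $\chi_\Lambda(\omega)=1$ if $\omega(t)\in\Lambda$ for all $t$ in the domain of $\omega$, and $0$ otherwise. $W^{T}_{xy}$ denotes the (unnormalized) Wiener measure on continuous paths $\omega:[0,T]\to\mathbb R^d$ from $x$ to $y$: for $0<t_1<\dots<t_n<T$ and $f:\mathbb R^{nd}\to\mathbb R$, $$\int dW^T_{xy}(\omega)f(\omega(t_1),\dots,\omega(t_n))=\int dx_1\cdots\int dx_n\,\psi_{t_1}(x_1-x)\psi_{t_2-t_1}(x_2-x_1)\cdots\psi_{T-t_n}(y-x_n)f(x_1,\dots,x_n),$$ with $\psi_t(x)=(2\pi t)^{-d/2}e^{-x^2/2t}$. $|\mu|$ is the total variation of $\mu$. *)

theory Defs
  imports "HOL-Analysis.Analysis"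
begin

definition heat_kernel :: "real \<Rightarrow> 'a::euclidean_space \<Rightarrow> real" where
  "heat_kernel t x = (2 * pi * t) powr (- real DIM('a) / 2) * exp (- ((norm x) ^ 2) / (2 * t))"

text \<open>Continuous paths on [0,T] from x to y, extended constantly outside [0,T]
  (canonical representatives of paths omega : [0,T] -> R^d).\<close>
definition cpaths :: "real \<Rightarrow> 'a::euclidean_space \<Rightarrow> 'a \<Rightarrow> (real \<Rightarrow> 'a) set" where
  "cpaths T x y = {\<omega>. continuous_on {0..T} \<omega> \<and> \<omega> 0 = x \<and> \<omega> T = y
                      \<and> (\<forall>t<0. \<omega> t = x) \<and> (\<forall>t>T. \<omega> t = y)}"

text \<open>Finite-dimensional distributions of the unnormalized Wiener measure W^T_{xy}
  evaluated on cylinder sets: the list contains (t_i, B_i) with s < t_1 < ... < t_n < T,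
  and the value is the iterated heat-kernel integral of prod_i indicator B_i (x_i).\<close>
fun bb_fd :: "real \<Rightarrow> real \<Rightarrow> 'a::euclidean_space \<Rightarrow> 'a \<Rightarrow> (real \<times> 'a set) list \<Rightarrow> ennreal" where
  "bb_fd T s x y [] = ennreal (heat_kernel (T - s) (y - x))"
| "bb_fd T s x y ((t, B) # rest) =
     (\<integral>\<^sup>+ x1. ennreal (heat_kernel (t - s) (x1 - x)) * indicator B x1 * bb_fd T t x1 y rest \<partial>lborel)"

definition is_wiener_family :: "(real \<Rightarrow> 'a::euclidean_space \<Rightarrow> 'a \<Rightarrow> (real \<Rightarrow> 'a) measure) \<Rightarrow> bool" where
  "is_wiener_family W \<longleftrightarrow>
    (\<forall>T>0. \<forall>x y.
       space (W T x y) = cpaths T x y \<and>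
       sets (W T x y) = sigma_sets (cpaths T x y)
                          {{\<omega> \<in> cpaths T x y. \<omega> t \<in> B} | t B. B \<in> sets borel} \<and>
       (\<forall>tbs. sorted_wrt (<) (map fst tbs) \<longrightarrow>
              (\<forall>(t, B) \<in> set tbs. 0 < t \<and> t < T \<and> B \<in> sets borel) \<longrightarrow>
              emeasure (W T x y) {\<omega> \<in> cpaths T x y. \<forall>(t, B) \<in> set tbs. \<omega> t \<in> B}
                = bb_fd T 0 x y tbs))"

definition chi :: "'a set \<Rightarrow> real \<Rightarrow> (real \<Rightarrow> 'a) \<Rightarrow> real" where
  "chi \<Lambda> T \<omega> = (if \<forall>t\<in>{0..T}. \<omega> t \<in> \<Lambda> then 1 else 0)"

definition pair_int :: "real \<Rightarrow> ('a::euclidean_space \<Rightarrow> real) \<Rightarrow> (real \<Rightarrow> 'a) \<Rightarrow> (real \<Rightarrow> 'a) \<Rightarrow> nat \<Rightarrow> nat \<Rightarrow> ennreal" where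
  "pair_int \<beta> U \<omega> \<omega>' m n = (\<integral>\<^sup>+ t\<in>{0..\<beta>}. ennreal (U (\<omega> (real m * \<beta> + t) - \<omega>' (real n * \<beta> + t))) \<partial>lborel)"

definition expneg :: "ennreal \<Rightarrow> real" where
  "expneg v = (if v = \<infinity> then 0 else exp (- enn2real v))"

definition self_factor :: "real \<Rightarrow> ('a::euclidean_space \<Rightarrow> real) \<Rightarrow> nat \<Rightarrow> (real \<Rightarrow> 'a) \<Rightarrow> real" where
  "self_factor \<beta> U l \<omega> = (\<Prod>m<l. \<Prod>n\<in>{m<..<l}. expneg (pair_int \<beta> U \<omega> \<omega> m n))"

definition zeta :: "real \<Rightarrow> ('a::euclidean_space \<Rightarrow> real) \<Rightarrow> nat \<Rightarrow> (real \<Rightarrow> 'a) \<Rightarrow> nat \<Rightarrow> (real \<Rightarrow> 'a) \<Rightarrow> real" where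
  "zeta \<beta> U l \<omega> l' \<omega>' = expneg (\<Sum>m<l. \<Sum>n<l'. pair_int \<beta> U \<omega> \<omega>' m n) - 1"

end

theory Submission
  imports Defs "HOL-Probability.Probability"
begin

lemma cpaths_cont:
  assumes "\<omega> \<in> cpaths T x y" "T \<ge> 0"
  shows "continuous_on UNIV \<omega>"
proof -
  have eq: "\<omega> = (\<lambda>t. \<omega> (max 0 (min T t)))"
  proof
    fix t show "\<omega> t = \<omega> (max 0 (min T t))"
      using assms unfolding cpaths_def
      by (cases "t < 0"; cases "t > T") (auto simp: max_def min_def)
  qed
  have c: "continuous_on {0..T} \<omega>" using assms unfolding cpaths_def by auto
  have "continuous_on UNIV (\<lambda>t. \<omega> (max 0 (min T t)))"
    apply (rule continuous_on_compose2[OF c])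
      apply (intro continuous_intros)
    using assms(2) by auto
  with eq show ?thesis by metis
qed

lemma eval_meas:
  assumes W: "is_wiener_family W" and T: "T > 0"
  shows "(\<lambda>\<omega>. \<omega> r) \<in> borel_measurable (W T x y)"
proof (rule measurableI)
  fix A :: "'a set" assume A: "A \<in> sets borel"
  have sp: "space (W T x y) = cpaths T x y" using W T unfolding is_wiener_family_def by auto
  have "(\<lambda>\<omega>. \<omega> r) -` A \<inter> space (W T x y) = {\<omega> \<in> cpaths T x y. \<omega> r \<in> A}" using sp by auto
  also have "\<dots> \<in> sets (W T x y)"
    using W T A unfolding is_wiener_family_def
    by (auto intro!: sigma_sets.Basic)
  finally show "(\<lambda>\<omega>. \<omega> r) -` A \<inter> space (W T x y) \<in> sets (W T x y)" .
qed auto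

lemma W_space: "is_wiener_family W \<Longrightarrow> T > 0 \<Longrightarrow> space (W T x y) = cpaths T x y"
  unfolding is_wiener_family_def by auto

lemma W_fd:
  assumes W: "is_wiener_family W" and T: "T > 0"
    and "sorted_wrt (<) (map fst tbs)" "\<forall>(t, B) \<in> set tbs. 0 < t \<and> t < T \<and> B \<in> sets borel"
  shows "emeasure (W T x y) {\<omega> \<in> cpaths T x y. \<forall>(t, B) \<in> set tbs. \<omega> t \<in> B} = bb_fd T 0 x y tbs"
proof -
  have F: "\<forall>tbs. sorted_wrt (<) (map fst tbs) \<longrightarrow>
              (\<forall>(t, B) \<in> set tbs. 0 < t \<and> t < T \<and> B \<in> sets borel) \<longrightarrow>
              emeasure (W T x y) {\<omega> \<in> cpaths T x y. \<forall>(t, B) \<in> set tbs. \<omega> t \<in> B}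
                = bb_fd T 0 x y tbs"
    using W T unfolding is_wiener_family_def by blast
  show ?thesis using F assms(3,4) by blast
qed

lemma W_total:
  assumes W: "is_wiener_family W" and T: "T > 0"
  shows "emeasure (W T x y) (space (W T x y)) = ennreal (heat_kernel T (y - x))"
proof -
  have "emeasure (W T x y) {\<omega> \<in> cpaths T x y. \<forall>(t, B) \<in> set []. \<omega> t \<in> B} = bb_fd T 0 x y []"
    by (rule W_fd[OF W T]) auto
  then show ?thesis using W_space[OF W T] by simp
qed

lemma W_finite:
  assumes W: "is_wiener_family W" and T: "T > 0"
  shows "finite_measure (W T x y)"
  by (rule finite_measureI) (simp add: W_total[OF W T])

lemma heat_kernel_nonneg: "heat_kernel t x \<ge> 0"
  unfolding heat_kernel_def by simp

lemma heat_kernel_meas[measurable (raw)]: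
  "f \<in> borel_measurable M \<Longrightarrow> g \<in> borel_measurable M \<Longrightarrow> (\<lambda>x. heat_kernel (f x) (g x)) \<in> borel_measurable M"
  unfolding heat_kernel_def
  apply (intro borel_measurable_times powr_real_measurable)
     apply (auto intro!: borel_measurable_times borel_measurable_const borel_measurable_divide)
  done

lemma W_distr:
  assumes W: "is_wiener_family W" and s: "0 < s" "s < T"
  shows "distr (W T x y) borel (\<lambda>\<omega>. \<omega> s) =
     density lborel (\<lambda>x1. ennreal (heat_kernel s (x1 - x) * heat_kernel (T - s) (y - x1)))"
proof (rule measure_eqI)
  have T: "T > 0" using s by auto
  fix A :: "'a set" assume "A \<in> sets (distr (W T x y) borel (\<lambda>\<omega>. \<omega> s))"
  then have A: "A \<in> sets borel" by simp
  have "emeasure (distr (W T x y) borel (\<lambda>\<omega>. \<omega> s)) A = emeasure (W T x y) ((\<lambda>\<omega>. \<omega> s) -` A \<inter> space (W T x y))"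
    by (rule emeasure_distr[OF eval_meas[OF W T] A])
  also have "(\<lambda>\<omega>. \<omega> s) -` A \<inter> space (W T x y) = {\<omega> \<in> cpaths T x y. \<forall>(t, B) \<in> set [(s, A)]. \<omega> t \<in> B}"
    using W_space[OF W T] by auto
  also have "emeasure (W T x y) \<dots> = bb_fd T 0 x y [(s, A)]"
    by (rule W_fd[OF W T]) (use s A in auto)
  also have "\<dots> = (\<integral>\<^sup>+ x1. ennreal (heat_kernel s (x1 - x) * heat_kernel (T - s) (y - x1)) * indicator A x1 \<partial>lborel)"
    by (auto intro!: nn_integral_cong simp: ennreal_mult heat_kernel_nonneg mult_ac)
  also have "\<dots> = emeasure (density lborel (\<lambda>x1. ennreal (heat_kernel s (x1 - x) * heat_kernel (T - s) (y - x1)))) A"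
    using A by (subst emeasure_density) auto
  finally show "emeasure (distr (W T x y) borel (\<lambda>\<omega>. \<omega> s)) A = emeasure (density lborel (\<lambda>x1. ennreal (heat_kernel s (x1 - x) * heat_kernel (T - s) (y - x1)))) A" .
qed simp

lemma W_eval_int:
  assumes W: "is_wiener_family W" and s: "0 < s" "s < T" and g[measurable]: "g \<in> borel_measurable borel"
  shows "(\<integral>\<^sup>+\<omega>. g (\<omega> s) \<partial>W T x y) = (\<integral>\<^sup>+x1. ennreal (heat_kernel s (x1 - x) * heat_kernel (T - s) (y - x1)) * g x1 \<partial>lborel)"
proof -
  have T: "T > 0" using s by auto
  have "(\<integral>\<^sup>+\<omega>. g (\<omega> s) \<partial>W T x y) = (\<integral>\<^sup>+x1. g x1 \<partial>distr (W T x y) borel (\<lambda>\<omega>. \<omega> s))"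
    by (rule nn_integral_distr[symmetric]) (auto intro: eval_meas[OF W T])
  also have "\<dots> = (\<integral>\<^sup>+x1. ennreal (heat_kernel s (x1 - x) * heat_kernel (T - s) (y - x1)) * g x1 \<partial>lborel)"
    unfolding W_distr[OF W s] by (subst nn_integral_density) auto
  finally show ?thesis .
qed

lemma nn_integral_reflect:
  fixes f :: "'a::euclidean_space \<Rightarrow> ennreal"
  assumes [measurable]: "f \<in> borel_measurable borel"
  shows "(\<integral>\<^sup>+x. f x \<partial>lborel) = (\<integral>\<^sup>+x. f (a - x) \<partial>lborel)"
proof -
  have L: "(lborel :: 'a measure) = density (distr lborel borel (\<lambda>x. a + (-1) *\<^sub>R x)) (\<lambda>_. \<bar>-1::real\<bar>^DIM('a))"
    by (rule lborel_affine) simp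
  have "(\<integral>\<^sup>+x. f x \<partial>lborel) = (\<integral>\<^sup>+x. f x \<partial>density (distr lborel borel (\<lambda>x. a + (-1) *\<^sub>R x)) (\<lambda>_. \<bar>-1::real\<bar>^DIM('a)))"
    using L by simp
  also have "\<dots> = (\<integral>\<^sup>+x. f (a - x) \<partial>lborel)"
    by (simp add: nn_integral_density nn_integral_distr)
  finally show ?thesis .
qed

lemma ck_pointwise:
  fixes v :: "'a::euclidean_space"
  assumes s: "0 < s" "s < T"
  defines "\<sigma> \<equiv> s * (T - s) / T"
  shows "heat_kernel s v * heat_kernel (T - s) v =
     heat_kernel T (0::'a) * (\<Prod>b\<in>Basis. normal_density 0 (sqrt \<sigma>) (v \<bullet> b))"
proof -
  define d where "d = real DIM('a)"
  have T: "T > 0" and Ts: "T - s > 0" using s by auto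
  have sig: "\<sigma> > 0" unfolding \<sigma>_def using s T by auto
  have sq: "(sqrt \<sigma>)\<^sup>2 = \<sigma>" using sig by simp
  have nd: "normal_density 0 (sqrt \<sigma>) x = (2 * pi * \<sigma>) powr (-1/2) * exp (- x\<^sup>2 / (2 * \<sigma>))" for x
    unfolding normal_density_def sq using sig
    by (simp add: powr_minus_divide powr_half_sqrt)
  have "(\<Prod>b\<in>Basis. normal_density 0 (sqrt \<sigma>) (v \<bullet> b))
        = ((2 * pi * \<sigma>) powr (-1/2)) ^ DIM('a) * exp (\<Sum>b\<in>Basis. - (v \<bullet> b)\<^sup>2 / (2 * \<sigma>))"
  proof -
    have "(\<Prod>b\<in>Basis. normal_density 0 (sqrt \<sigma>) (v \<bullet> b)) =
       (\<Prod>b\<in>(Basis::'a set). (2 * pi * \<sigma>) powr (-1/2)) * (\<Prod>b\<in>Basis. exp (- (v \<bullet> b)\<^sup>2 / (2 * \<sigma>)))"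
      unfolding nd by (rule prod.distrib)
    also have "(\<Prod>b\<in>Basis. exp (- (v \<bullet> b)\<^sup>2 / (2 * \<sigma>))) = exp (\<Sum>b\<in>Basis. - (v \<bullet> b)\<^sup>2 / (2 * \<sigma>))"
      by (simp add: exp_sum)
    also have "(\<Prod>b\<in>(Basis::'a set). (2 * pi * \<sigma>) powr (-1/2)) = ((2 * pi * \<sigma>) powr (-1/2)) ^ DIM('a)"
      by (rule prod_constant)
    finally show ?thesis .
  qed
  also have "(\<Sum>b\<in>Basis. - (v \<bullet> b)\<^sup>2 / (2 * \<sigma>)) = - (norm v)\<^sup>2 / (2 * \<sigma>)"
  proof -
    have nv: "(norm v)\<^sup>2 = (\<Sum>b\<in>Basis. (v \<bullet> b)\<^sup>2)"
      unfolding power2_norm_eq_inner by (subst euclidean_inner) (simp add: power2_eq_square)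
    show ?thesis by (simp add: nv sum_divide_distrib[symmetric] sum_negf)
  qed
  also have "((2 * pi * \<sigma>) powr (-1/2)) ^ DIM('a) = (2 * pi * \<sigma>) powr (- d / 2)"
    using sig by (simp add: powr_power d_def)
  finally have P: "(\<Prod>b\<in>Basis. normal_density 0 (sqrt \<sigma>) (v \<bullet> b)) =
      (2 * pi * \<sigma>) powr (- d / 2) * exp (- (norm v)\<^sup>2 / (2 * \<sigma>))" .
  have E: "exp (- (norm v)\<^sup>2 / (2 * s)) * exp (- (norm v)\<^sup>2 / (2 * (T - s))) = exp (- (norm v)\<^sup>2 / (2 * \<sigma>))"
    unfolding exp_add[symmetric] \<sigma>_def using s T Ts by (simp add: field_simps)
  have Q: "(2 * pi * s) powr (- d / 2) * (2 * pi * (T - s)) powr (- d / 2)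
      = (2 * pi * T) powr (- d / 2) * (2 * pi * \<sigma>) powr (- d / 2)"
  proof -
    have "(2 * pi * s) * (2 * pi * (T - s)) = (2 * pi * T) * (2 * pi * \<sigma>)"
      unfolding \<sigma>_def using T by (simp add: field_simps)
    then show ?thesis using s T Ts sig
      by (metis powr_mult mult_nonneg_nonneg less_imp_le pi_ge_zero zero_le_numeral)
  qed
  show ?thesis unfolding P heat_kernel_def d_def[symmetric]
    using E Q by (simp add: algebra_simps)
qed

lemma ck_integral:
  fixes x1 :: "'a::euclidean_space"
  assumes s: "0 < s" "s < T"
  shows "(\<integral>\<^sup>+x'. ennreal (heat_kernel s (x1 - x') * heat_kernel (T - s) (x' - x1)) \<partial>lborel)
         = ennreal (heat_kernel T (0::'a))"
proof -
  define \<sigma> where "\<sigma> = s * (T - s) / T"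
  have sig: "\<sigma> > 0" unfolding \<sigma>_def using s by auto
  have "(\<integral>\<^sup>+x'. ennreal (heat_kernel s (x1 - x') * heat_kernel (T - s) (x' - x1)) \<partial>lborel)
      = (\<integral>\<^sup>+x'. ennreal (heat_kernel s (x1 - x') * heat_kernel (T - s) (x1 - x')) \<partial>lborel)"
    by (simp add: heat_kernel_def norm_minus_commute)
  also have "\<dots> = (\<integral>\<^sup>+v. ennreal (heat_kernel s (v::'a) * heat_kernel (T - s) v) \<partial>lborel)"
  proof -
    define F where "F = (\<lambda>v::'a. ennreal (heat_kernel s v * heat_kernel (T - s) v))"
    have m: "F \<in> borel_measurable borel" unfolding F_def by measurable
    have "(\<integral>\<^sup>+x'. F (x1 - x') \<partial>lborel) = (\<integral>\<^sup>+v. F v \<partial>lborel)"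
      using nn_integral_reflect[OF m, of x1] by simp
    then show ?thesis by (simp add: F_def)
  qed
  also have "\<dots> = (\<integral>\<^sup>+v. ennreal (heat_kernel T (0::'a)) * (\<Prod>b\<in>Basis. ennreal (normal_density 0 (sqrt \<sigma>) ((v::'a) \<bullet> b))) \<partial>lborel)"
    unfolding ck_pointwise[OF s] \<sigma>_def
    by (simp add: ennreal_mult heat_kernel_nonneg prod_nonneg prod_ennreal)
  also have "\<dots> = ennreal (heat_kernel T (0::'a)) * (\<integral>\<^sup>+v. (\<Prod>b\<in>Basis. ennreal (normal_density 0 (sqrt \<sigma>) ((v::'a) \<bullet> b))) \<partial>lborel)"
    by (rule nn_integral_cmult) measurable
  also have "(\<integral>\<^sup>+v. (\<Prod>b\<in>Basis. ennreal (normal_density 0 (sqrt \<sigma>) ((v::'a) \<bullet> b))) \<partial>lborel)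
      = (\<Prod>b\<in>(Basis::'a set). (\<integral>\<^sup>+x. ennreal (normal_density 0 (sqrt \<sigma>) x) \<partial>lborel))"
    by (rule nn_integral_lborel_prod) auto
  also have "(\<integral>\<^sup>+x. ennreal (normal_density 0 (sqrt \<sigma>) x) \<partial>lborel) = 1"
  proof -
    have "0 < sqrt \<sigma>" using sig by simp
    then show ?thesis by (subst nn_integral_eq_integral) auto
  qed
  finally show ?thesis by simp
qed

lemma floor_approx:
  "(\<lambda>j. real_of_int \<lfloor>real (Suc j) * t\<rfloor> / real (Suc j)) \<longlonglongrightarrow> t"
proof (rule tendsto_sandwich[where f="\<lambda>j. t - 1 / real (Suc j)" and h="\<lambda>j. t"])
  show "\<forall>\<^sub>F j in sequentially. t - 1 / real (Suc j) \<le> real_of_int \<lfloor>real (Suc j) * t\<rfloor> / real (Suc j)"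
  proof (intro always_eventually allI)
    fix j
    have n: "real (Suc j) > 0" by simp
    have "t - 1 / real (Suc j) = (real (Suc j) * t - 1) / real (Suc j)" using n by (simp add: field_simps)
    also have "\<dots> \<le> real_of_int \<lfloor>real (Suc j) * t\<rfloor> / real (Suc j)"
      by (rule divide_right_mono) (linarith, simp)
    finally show "t - 1 / real (Suc j) \<le> real_of_int \<lfloor>real (Suc j) * t\<rfloor> / real (Suc j)" .
  qed
  show "\<forall>\<^sub>F j in sequentially. real_of_int \<lfloor>real (Suc j) * t\<rfloor> / real (Suc j) \<le> t"
  proof (intro always_eventually allI)
    fix j
    have n: "real (Suc j) > 0" by simp
    have "real_of_int \<lfloor>real (Suc j) * t\<rfloor> / real (Suc j) \<le> (real (Suc j) * t) / real (Suc j)"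
      by (rule divide_right_mono) (linarith, simp)
    also have "\<dots> = t" using n by simp
    finally show "real_of_int \<lfloor>real (Suc j) * t\<rfloor> / real (Suc j) \<le> t" .
  qed
  have "(\<lambda>j. 1 / real (Suc j)) \<longlonglongrightarrow> 0" by (rule LIMSEQ_Suc[OF lim_inverse_n'])
  then show "(\<lambda>j. t - 1 / real (Suc j)) \<longlonglongrightarrow> t"
    using tendsto_diff[of "\<lambda>_. t" t sequentially] by fastforce
qed simp

lemma joint_meas:
  fixes W :: "real \<Rightarrow> 'a::euclidean_space \<Rightarrow> 'a \<Rightarrow> (real \<Rightarrow> 'a) measure"
  assumes W: "is_wiener_family W" and T: "T > 0"
  shows "(\<lambda>p. snd p (c + fst p)) \<in> borel_measurable (lborel \<Otimes>\<^sub>M W T x y)"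
proof (rule borel_measurable_LIMSEQ_metric)
  fix j :: nat
  have "(\<lambda>p. (\<lambda>i::int. snd p (c + real_of_int i / real (Suc j))) (\<lfloor>real (Suc j) * fst p\<rfloor>)) \<in> borel_measurable (lborel \<Otimes>\<^sub>M W T x y)"
  proof (rule measurable_compose_countable[where f="\<lambda>i p. snd p (c + real_of_int i / real (Suc j))"])
    fix i :: int
    show "(\<lambda>p. snd p (c + real_of_int i / real (Suc j))) \<in> borel_measurable (lborel \<Otimes>\<^sub>M W T x y)"
      by (rule measurable_compose[OF measurable_snd eval_meas[OF W T]])
  next
    show "(\<lambda>p. \<lfloor>real (Suc j) * fst p\<rfloor>) \<in> measurable (lborel \<Otimes>\<^sub>M W T x y) (count_space UNIV)"
      by measurable
  qed
  then show "(\<lambda>p. snd p (c + real_of_int \<lfloor>real (Suc j) * fst p\<rfloor> / real (Suc j))) \<in> borel_measurable (lborel \<Otimes>\<^sub>M W T x y)"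
    by simp
next
  fix p :: "real \<times> (real \<Rightarrow> 'a)" assume "p \<in> space (lborel \<Otimes>\<^sub>M W T x y)"
  then have "snd p \<in> cpaths T x y" by (auto simp: space_pair_measure W_space[OF W T])
  then have c: "continuous_on UNIV (snd p)" using cpaths_cont[of "snd p" T x y] T by auto
  have lim: "(\<lambda>j. c + real_of_int \<lfloor>real (Suc j) * fst p\<rfloor> / real (Suc j)) \<longlonglongrightarrow> c + fst p"
    by (intro tendsto_intros floor_approx)
  show "(\<lambda>j. snd p (c + real_of_int \<lfloor>real (Suc j) * fst p\<rfloor> / real (Suc j))) \<longlonglongrightarrow> snd p (c + fst p)"
    using continuous_on_tendsto_compose[OF c lim] by simp
qed

lemma expneg_bounds: "0 \<le> expneg v" "expneg v \<le> 1"
  unfolding expneg_def by (auto simp: enn2real_nonneg)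

lemma zeta_le: "ennreal \<bar>expneg S - 1\<bar> \<le> S"
proof (cases S)
  case (real r)
  show ?thesis
  proof (cases "S = \<infinity>")
    case True then show ?thesis by simp
  next
    case False
    then have e: "expneg S = exp (- r)" using real by (simp add: expneg_def)
    have "1 - r \<le> exp (- r)" using exp_ge_add_one_self[of "-r"] by simp
    moreover have "exp (- r) \<le> 1" using real by simp
    ultimately have "\<bar>exp (- r) - 1\<bar> \<le> r" by simp
    then show ?thesis using real e by (simp add: ennreal_leI)
  qed
qed simp

lemma self_factor_bounds: "0 \<le> self_factor \<beta> U l \<omega>" "self_factor \<beta> U l \<omega> \<le> 1"
  unfolding self_factor_def
  by (auto intro!: prod_nonneg prod_le_1 simp: expneg_bounds)

lemma chi_bounds: "0 \<le> chi \<Lambda> T \<omega>" "chi \<Lambda> T \<omega> \<le> 1"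
  unfolding chi_def by auto

lemma integrand_le:
  assumes z: "0 < z" and \<epsilon>: "\<epsilon> = 1 \<or> \<epsilon> = -1" and L: "L \<ge> 1"
  shows "ennreal (\<bar>z ^ L * \<epsilon> ^ (L + 1) / real L\<bar> * chi \<Lambda> T \<omega>' * self_factor \<beta> U L \<omega>'
            * \<bar>zeta \<beta> U l \<omega> L \<omega>'\<bar> * exp ((- ln z) * real L))
         \<le> ennreal (1 / real L) * (\<Sum>m<l. \<Sum>n<L. pair_int \<beta> U \<omega> \<omega>' m n)"
proof -
  have a1: "\<bar>z ^ L * \<epsilon> ^ (L + 1) / real L\<bar> = z ^ L / real L"
    using z \<epsilon> by (auto simp: abs_mult power_abs)
  have a2: "exp ((- ln z) * real L) = 1 / z ^ L"
  proof -
    have "exp (real L * ln z) = z ^ L" using z by (simp add: exp_of_nat_mult)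
    then show ?thesis by (simp add: exp_minus inverse_eq_divide mult.commute)
  qed
  have "\<bar>z ^ L * \<epsilon> ^ (L + 1) / real L\<bar> * chi \<Lambda> T \<omega>' * self_factor \<beta> U L \<omega>'
            * \<bar>zeta \<beta> U l \<omega> L \<omega>'\<bar> * exp ((- ln z) * real L)
        = (1 / real L) * (chi \<Lambda> T \<omega>' * self_factor \<beta> U L \<omega>' * \<bar>zeta \<beta> U l \<omega> L \<omega>'\<bar>)"
    unfolding a1 a2 using z by (simp add: field_simps)
  also have "\<dots> \<le> (1 / real L) * \<bar>zeta \<beta> U l \<omega> L \<omega>'\<bar>"
  proof (rule mult_left_mono)
    have "chi \<Lambda> T \<omega>' * self_factor \<beta> U L \<omega>' \<le> 1"
      using chi_bounds self_factor_bounds by (metis mult_le_one)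
    moreover have "0 \<le> chi \<Lambda> T \<omega>' * self_factor \<beta> U L \<omega>'"
      by (intro mult_nonneg_nonneg chi_bounds self_factor_bounds)
    ultimately show "chi \<Lambda> T \<omega>' * self_factor \<beta> U L \<omega>' * \<bar>zeta \<beta> U l \<omega> L \<omega>'\<bar> \<le> \<bar>zeta \<beta> U l \<omega> L \<omega>'\<bar>"
      by (simp add: mult_left_le_one_le)
  qed simp
  finally have "ennreal (\<bar>z ^ L * \<epsilon> ^ (L + 1) / real L\<bar> * chi \<Lambda> T \<omega>' * self_factor \<beta> U L \<omega>'
            * \<bar>zeta \<beta> U l \<omega> L \<omega>'\<bar> * exp ((- ln z) * real L)) \<le> ennreal (1 / real L) * ennreal \<bar>zeta \<beta> U l \<omega> L \<omega>'\<bar>"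
    by (simp add: ennreal_mult[symmetric] ennreal_leI)
  also have "\<dots> \<le> ennreal (1 / real L) * (\<Sum>m<l. \<Sum>n<L. pair_int \<beta> U \<omega> \<omega>' m n)"
    unfolding zeta_def by (intro mult_left_mono zeta_le) auto
  finally show ?thesis .
qed

lemma joint_meas2:
  fixes W :: "real \<Rightarrow> 'a::euclidean_space \<Rightarrow> 'a \<Rightarrow> (real \<Rightarrow> 'a) measure"
  assumes W: "is_wiener_family W" and T: "T > 0"
  shows "(\<lambda>p. fst p (c + snd p)) \<in> borel_measurable (W T x y \<Otimes>\<^sub>M lborel)"
proof -
  have "(\<lambda>p. snd ((\<lambda>(x,y). (y,x)) p) (c + fst ((\<lambda>(x,y). (y,x)) p))) \<in> borel_measurable (W T x y \<Otimes>\<^sub>M lborel)"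
    by (rule measurable_compose[OF measurable_pair_swap' joint_meas[OF W T]])
  then show ?thesis by (simp add: case_prod_beta)
qed

lemma pair_int_meas:
  fixes W :: "real \<Rightarrow> 'a::euclidean_space \<Rightarrow> 'a \<Rightarrow> (real \<Rightarrow> 'a) measure"
  assumes W: "is_wiener_family W" and T: "T > 0"
    and U[measurable]: "U \<in> borel_measurable borel"
    and om[measurable]: "\<omega> \<in> borel_measurable borel"
  shows "(\<lambda>\<omega>'. pair_int \<beta> U \<omega> \<omega>' m n) \<in> borel_measurable (W T x y)"
proof -
  note jm[measurable] = joint_meas2[OF W T, of "real n * \<beta>" x y]
  show ?thesis unfolding pair_int_def by measurable
qed

lemma pair_int_integral:
  fixes W :: "real \<Rightarrow> 'a::euclidean_space \<Rightarrow> 'a \<Rightarrow> (real \<Rightarrow> 'a) measure"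
  assumes W: "is_wiener_family W" and \<beta>: "\<beta> > 0" and L: "n < L"
    and U[measurable]: "U \<in> borel_measurable borel"
    and om[measurable]: "\<omega> \<in> borel_measurable borel"
  shows "(\<integral>\<^sup>+\<omega>'. pair_int \<beta> U \<omega> \<omega>' m n \<partial>W (real L * \<beta>) x' x') =
    (\<integral>\<^sup>+t. (\<integral>\<^sup>+x1. ennreal (heat_kernel (real n * \<beta> + t) (x1 - x') * heat_kernel (real L * \<beta> - (real n * \<beta> + t)) (x' - x1))
                      * ennreal (U (\<omega> (real m * \<beta> + t) - x1)) \<partial>lborel) * indicator {0<..<\<beta>} t \<partial>lborel)"
proof -
  define T where "T = real L * \<beta>"
  have T: "T > 0" unfolding T_def using L \<beta> by simp
  interpret Wf: finite_measure "W T x' x'" by (rule W_finite[OF W T])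
  have "pair_sigma_finite lborel (W T x' x')"
    by (simp add: pair_sigma_finite_def lborel.sigma_finite_measure_axioms Wf.sigma_finite_measure_axioms)
  then interpret P: pair_sigma_finite lborel "W T x' x'" .
  note jm[measurable] = joint_meas[OF W T, of "real n * \<beta>" x' x']
  note ev[measurable] = eval_meas[OF W T]
  have "(\<integral>\<^sup>+\<omega>'. pair_int \<beta> U \<omega> \<omega>' m n \<partial>W T x' x') =
     (\<integral>\<^sup>+\<omega>'. (\<integral>\<^sup>+t. ennreal (U (\<omega> (real m * \<beta> + t) - \<omega>' (real n * \<beta> + t))) * indicator {0..\<beta>} t \<partial>lborel) \<partial>W T x' x')"
    by (simp add: pair_int_def)
  also have "\<dots> = (\<integral>\<^sup>+t. (\<integral>\<^sup>+\<omega>'. ennreal (U (\<omega> (real m * \<beta> + t) - \<omega>' (real n * \<beta> + t))) * indicator {0..\<beta>} t \<partial>W T x' x') \<partial>lborel)"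
    by (rule P.Fubini') measurable
  also have "\<dots> = (\<integral>\<^sup>+t. (\<integral>\<^sup>+\<omega>'. ennreal (U (\<omega> (real m * \<beta> + t) - \<omega>' (real n * \<beta> + t))) \<partial>W T x' x') * indicator {0..\<beta>} t \<partial>lborel)"
    by (intro nn_integral_cong nn_integral_multc) measurable
  also have "\<dots> = (\<integral>\<^sup>+t. (\<integral>\<^sup>+x1. ennreal (heat_kernel (real n * \<beta> + t) (x1 - x') * heat_kernel (T - (real n * \<beta> + t)) (x' - x1))
                      * ennreal (U (\<omega> (real m * \<beta> + t) - x1)) \<partial>lborel) * indicator {0<..<\<beta>} t \<partial>lborel)"
  proof (rule nn_integral_cong_AE)
    have "AE t in lborel. t \<noteq> 0" "AE t in lborel. t \<noteq> \<beta>"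
      by (rule AE_lborel_singleton)+
    then show "AE t in lborel. (\<integral>\<^sup>+\<omega>'. ennreal (U (\<omega> (real m * \<beta> + t) - \<omega>' (real n * \<beta> + t))) \<partial>W T x' x') * indicator {0..\<beta>} t
        = (\<integral>\<^sup>+x1. ennreal (heat_kernel (real n * \<beta> + t) (x1 - x') * heat_kernel (T - (real n * \<beta> + t)) (x' - x1))
                      * ennreal (U (\<omega> (real m * \<beta> + t) - x1)) \<partial>lborel) * indicator {0<..<\<beta>} t"
    proof eventually_elim
      case (elim t)
      show ?case
      proof (cases "0 < t \<and> t < \<beta>")
        case True
        have n1: "real n + 1 \<le> real L" using L by simp
        have "(real n + 1) * \<beta> \<le> real L * \<beta>" by (rule mult_right_mono[OF n1]) (use \<beta> in simp)
        then have le: "real n * \<beta> + \<beta> \<le> T" unfolding T_def by (simp add: algebra_simps)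
        have nb: "0 \<le> real n * \<beta>" using \<beta> by simp
        have s: "0 < real n * \<beta> + t" "real n * \<beta> + t < T" using nb le True by linarith+
        have gm: "(\<lambda>y. ennreal (U (\<omega> (real m * \<beta> + t) - y))) \<in> borel_measurable borel" by measurable
        show ?thesis using True W_eval_int[OF W s gm, of x' x'] by simp
      next
        case False
        with elim have "t \<notin> {0..\<beta>}" "t \<notin> {0<..<\<beta>}" by auto
        then show ?thesis by simp
      qed
    qed
  qed
  finally show ?thesis unfolding T_def .
qed

lemma H_int:
  fixes a :: "'a::euclidean_space"
  assumes s: "0 < s" "s < T" and U[measurable]: "U \<in> borel_measurable borel"
  shows "(\<integral>\<^sup>+x'. (\<integral>\<^sup>+x1. ennreal (heat_kernel s (x1 - x') * heat_kernel (T - s) (x' - x1)) * ennreal (U (a - x1)) \<partial>lborel) \<partial>lborel)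
     = ennreal (heat_kernel T (0::'a)) * (\<integral>\<^sup>+y. ennreal (U y) \<partial>lborel)"
proof -
  have "(\<integral>\<^sup>+x'. (\<integral>\<^sup>+x1. ennreal (heat_kernel s (x1 - x') * heat_kernel (T - s) (x' - x1)) * ennreal (U (a - x1)) \<partial>lborel) \<partial>lborel)
     = (\<integral>\<^sup>+x1. (\<integral>\<^sup>+x'. ennreal (heat_kernel s (x1 - x') * heat_kernel (T - s) (x' - x1)) * ennreal (U (a - x1)) \<partial>lborel) \<partial>lborel)"
    by (rule lborel_pair.Fubini') measurable
  also have "\<dots> = (\<integral>\<^sup>+x1. (\<integral>\<^sup>+x'. ennreal (heat_kernel s (x1 - x') * heat_kernel (T - s) (x' - x1)) \<partial>lborel) * ennreal (U (a - x1)) \<partial>lborel)"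
    by (intro nn_integral_cong nn_integral_multc) measurable
  also have "\<dots> = (\<integral>\<^sup>+x1. ennreal (heat_kernel T (0::'a)) * ennreal (U (a - x1)) \<partial>lborel)"
    by (simp add: ck_integral[OF s])
  also have "\<dots> = ennreal (heat_kernel T (0::'a)) * (\<integral>\<^sup>+x1. ennreal (U (a - x1)) \<partial>lborel)"
    by (rule nn_integral_cmult) measurable
  also have "(\<integral>\<^sup>+x1. ennreal (U (a - x1)) \<partial>lborel) = (\<integral>\<^sup>+y. ennreal (U y) \<partial>lborel)"
  proof -
    have m: "(\<lambda>y. ennreal (U y)) \<in> borel_measurable borel" by measurable
    show ?thesis using nn_integral_reflect[OF m, of a] by simp
  qed
  finally show ?thesis .
qed

lemma claim:
  fixes W :: "real \<Rightarrow> 'a::euclidean_space \<Rightarrow> 'a \<Rightarrow> (real \<Rightarrow> 'a) measure"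
    and \<Lambda> :: "'a set" and U :: "'a \<Rightarrow> real" and \<omega> :: "real \<Rightarrow> 'a"
  assumes W: "is_wiener_family W" and \<beta>: "\<beta> > 0" and z: "0 < z" and \<epsilon>: "\<epsilon> = 1 \<or> \<epsilon> = -1"
    and Um[measurable]: "U \<in> borel_measurable borel"
    and om[measurable]: "\<omega> \<in> borel_measurable borel" and L: "L \<ge> 1"
  shows "(\<integral>\<^sup>+x'. indicator \<Lambda> x' * (\<integral>\<^sup>+\<omega>'. ennreal (\<bar>z ^ L * \<epsilon> ^ (L + 1) / real L\<bar>
            * chi \<Lambda> (real L * \<beta>) \<omega>' * self_factor \<beta> U L \<omega>'
            * \<bar>zeta \<beta> U l \<omega> L \<omega>'\<bar> * exp ((- ln z) * real L)) \<partial>(W (real L * \<beta>) x' x')) \<partial>lborel)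
     \<le> ennreal (real l * \<beta> * heat_kernel (real L * \<beta>) (0::'a)) * (\<integral>\<^sup>+y. ennreal (U y) \<partial>lborel)"
proof -
  define T where "T = real L * \<beta>"
  have T: "T > 0" unfolding T_def using L \<beta> by simp
  define H where "H m n t x' = (\<integral>\<^sup>+x1. ennreal (heat_kernel (real n * \<beta> + t) (x1 - x') * heat_kernel (real L * \<beta> - (real n * \<beta> + t)) (x' - x1))
                      * ennreal (U (\<omega> (real m * \<beta> + t) - x1)) \<partial>lborel)" for m n :: nat and t :: real and x' :: 'a
  define F where "F \<omega>' = ennreal (\<bar>z ^ L * \<epsilon> ^ (L + 1) / real L\<bar>
            * chi \<Lambda> (real L * \<beta>) \<omega>' * self_factor \<beta> U L \<omega>'
            * \<bar>zeta \<beta> U l \<omega> L \<omega>'\<bar> * exp ((- ln z) * real L))" for \<omega>'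
  define IU where "IU = (\<integral>\<^sup>+y. ennreal (U y) \<partial>lborel)"
  have Hm[measurable]: "(\<lambda>p. H m n (fst p) (snd p)) \<in> borel_measurable (lborel \<Otimes>\<^sub>M lborel)" for m n
    unfolding H_def by measurable
  have Hm'[measurable]: "(\<lambda>p. H m n (snd p) (fst p)) \<in> borel_measurable (lborel \<Otimes>\<^sub>M lborel)" for m n
    unfolding H_def by measurable
  have inner: "(\<integral>\<^sup>+\<omega>'. F \<omega>' \<partial>W (real L * \<beta>) x' x') \<le>
      ennreal (1 / real L) * (\<Sum>m<l. \<Sum>n<L. \<integral>\<^sup>+t. H m n t x' * indicator {0<..<\<beta>} t \<partial>lborel)" for x'
  proof -
    have pm[measurable]: "(\<lambda>\<omega>'. pair_int \<beta> U \<omega> \<omega>' m n) \<in> borel_measurable (W (real L * \<beta>) x' x')" for m n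
      using pair_int_meas[OF W T[unfolded T_def] Um om] .
    have "(\<integral>\<^sup>+\<omega>'. F \<omega>' \<partial>W (real L * \<beta>) x' x') \<le>
       (\<integral>\<^sup>+\<omega>'. ennreal (1 / real L) * (\<Sum>m<l. \<Sum>n<L. pair_int \<beta> U \<omega> \<omega>' m n) \<partial>W (real L * \<beta>) x' x')"
      unfolding F_def by (rule nn_integral_mono) (rule integrand_le[OF z \<epsilon> L])
    also have "\<dots> = ennreal (1 / real L) * (\<integral>\<^sup>+\<omega>'. (\<Sum>m<l. \<Sum>n<L. pair_int \<beta> U \<omega> \<omega>' m n) \<partial>W (real L * \<beta>) x' x')"
      by (rule nn_integral_cmult) measurable
    also have "(\<integral>\<^sup>+\<omega>'. (\<Sum>m<l. \<Sum>n<L. pair_int \<beta> U \<omega> \<omega>' m n) \<partial>W (real L * \<beta>) x' x')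
        = (\<Sum>m<l. \<Sum>n<L. \<integral>\<^sup>+\<omega>'. pair_int \<beta> U \<omega> \<omega>' m n \<partial>W (real L * \<beta>) x' x')"
      apply (subst nn_integral_sum)
       apply measurable
      apply (intro sum.cong refl nn_integral_sum)
      apply measurable
      done
    also have "\<dots> = (\<Sum>m<l. \<Sum>n<L. \<integral>\<^sup>+t. H m n t x' * indicator {0<..<\<beta>} t \<partial>lborel)"
      unfolding H_def by (intro sum.cong refl pair_int_integral[OF W \<beta> _ Um om]) simp
    finally show ?thesis .
  qed
  have tint: "(\<integral>\<^sup>+t. (\<integral>\<^sup>+x'. H m n t x' \<partial>lborel) * indicator {0<..<\<beta>} t \<partial>lborel)
      = ennreal (heat_kernel T (0::'a)) * IU * ennreal \<beta>" if n: "n < L" for m n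
  proof -
    have "(\<integral>\<^sup>+t. (\<integral>\<^sup>+x'. H m n t x' \<partial>lborel) * indicator {0<..<\<beta>} t \<partial>lborel)
        = (\<integral>\<^sup>+t. (ennreal (heat_kernel T (0::'a)) * IU) * indicator {0<..<\<beta>} t \<partial>lborel)"
    proof (rule nn_integral_cong)
      fix t :: real
      show "(\<integral>\<^sup>+x'. H m n t x' \<partial>lborel) * indicator {0<..<\<beta>} t = (ennreal (heat_kernel T (0::'a)) * IU) * indicator {0<..<\<beta>} t"
      proof (cases "0 < t \<and> t < \<beta>")
        case True
        have n1: "real n + 1 \<le> real L" using n by simp
        have "(real n + 1) * \<beta> \<le> real L * \<beta>" by (rule mult_right_mono[OF n1]) (use \<beta> in simp)
        then have le: "real n * \<beta> + \<beta> \<le> T" unfolding T_def by (simp add: algebra_simps)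
        have nb: "0 \<le> real n * \<beta>" using \<beta> by simp
        have s: "0 < real n * \<beta> + t" "real n * \<beta> + t < T" using nb le True by linarith+
        show ?thesis using True H_int[OF s Um, of "\<omega> (real m * \<beta> + t)"]
          unfolding H_def IU_def T_def by simp
      qed simp
    qed
    also have "\<dots> = ennreal (heat_kernel T (0::'a)) * IU * ennreal \<beta>"
      using \<beta> by (subst nn_integral_cmult_indicator) auto
    finally show ?thesis .
  qed
  have "(\<integral>\<^sup>+x'. indicator \<Lambda> x' * (\<integral>\<^sup>+\<omega>'. F \<omega>' \<partial>W (real L * \<beta>) x' x') \<partial>lborel)
     \<le> (\<integral>\<^sup>+x'. ennreal (1 / real L) * (\<Sum>m<l. \<Sum>n<L. \<integral>\<^sup>+t. H m n t x' * indicator {0<..<\<beta>} t \<partial>lborel) \<partial>lborel)"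
  proof (rule nn_integral_mono)
    fix x' :: 'a
    have "indicator \<Lambda> x' * (\<integral>\<^sup>+\<omega>'. F \<omega>' \<partial>W (real L * \<beta>) x' x') \<le> (\<integral>\<^sup>+\<omega>'. F \<omega>' \<partial>W (real L * \<beta>) x' x')"
      by (simp split: split_indicator)
    also note inner[of x']
    finally show "indicator \<Lambda> x' * (\<integral>\<^sup>+\<omega>'. F \<omega>' \<partial>W (real L * \<beta>) x' x')
       \<le> ennreal (1 / real L) * (\<Sum>m<l. \<Sum>n<L. \<integral>\<^sup>+t. H m n t x' * indicator {0<..<\<beta>} t \<partial>lborel)" .
  qed
  also have "\<dots> = ennreal (1 / real L) * (\<Sum>m<l. \<Sum>n<L. \<integral>\<^sup>+x'. (\<integral>\<^sup>+t. H m n t x' * indicator {0<..<\<beta>} t \<partial>lborel) \<partial>lborel)"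
    apply (subst nn_integral_cmult)
     apply measurable
    apply (subst nn_integral_sum)
     apply measurable
    apply (intro arg_cong2[where f="(*)"] refl sum.cong nn_integral_sum)
    apply measurable
    done
  also have "\<dots> = ennreal (1 / real L) * (\<Sum>m<l. \<Sum>n<L. \<integral>\<^sup>+t. (\<integral>\<^sup>+x'. H m n t x' \<partial>lborel) * indicator {0<..<\<beta>} t \<partial>lborel)"
  proof (intro arg_cong2[where f="(*)"] refl sum.cong)
    fix m n
    have "(\<integral>\<^sup>+x'. (\<integral>\<^sup>+t. H m n t x' * indicator {0<..<\<beta>} t \<partial>lborel) \<partial>lborel)
       = (\<integral>\<^sup>+t. (\<integral>\<^sup>+x'. H m n t x' * indicator {0<..<\<beta>} t \<partial>lborel) \<partial>lborel)"
      by (rule lborel_pair.Fubini') measurable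
    also have "\<dots> = (\<integral>\<^sup>+t. (\<integral>\<^sup>+x'. H m n t x' \<partial>lborel) * indicator {0<..<\<beta>} t \<partial>lborel)"
      unfolding H_def by (intro nn_integral_cong nn_integral_multc) measurable
    finally show "(\<integral>\<^sup>+x'. (\<integral>\<^sup>+t. H m n t x' * indicator {0<..<\<beta>} t \<partial>lborel) \<partial>lborel)
       = (\<integral>\<^sup>+t. (\<integral>\<^sup>+x'. H m n t x' \<partial>lborel) * indicator {0<..<\<beta>} t \<partial>lborel)" .
  qed
  also have "\<dots> = ennreal (1 / real L) * (\<Sum>m<l. \<Sum>n<L. ennreal (heat_kernel T (0::'a)) * IU * ennreal \<beta>)"
    by (intro arg_cong2[where f="(*)"] refl sum.cong tint) auto
  also have "\<dots> = ennreal (real l * \<beta> * heat_kernel T (0::'a)) * IU"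
  proof -
    have "ennreal (1 / real L) * (\<Sum>m<l. \<Sum>n<L. ennreal (heat_kernel T (0::'a)) * IU * ennreal \<beta>)
        = ennreal (1 / real L) * (of_nat l * (of_nat L * (ennreal (heat_kernel T (0::'a)) * IU * ennreal \<beta>)))"
      by simp
    also have "\<dots> = ennreal (1 / real L * real l * real L * heat_kernel T (0::'a) * \<beta>) * IU"
      using \<beta> by (simp add: ennreal_of_nat_eq_real_of_nat ennreal_mult'[symmetric] heat_kernel_nonneg mult_ac)
    also have "1 / real L * real l * real L * heat_kernel T (0::'a) * \<beta> = real l * \<beta> * heat_kernel T (0::'a)"
      using L by (simp add: field_simps)
    finally show ?thesis .
  qed
  finally show ?thesis unfolding F_def IU_def T_def .
qed

theorem mainTheorem7:
  fixes W :: "real \<Rightarrow> 'a::euclidean_space \<Rightarrow> 'a \<Rightarrow> (real \<Rightarrow> 'a) measure"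
    and \<Lambda> :: "'a set" and \<beta> z \<epsilon> :: real and U :: "'a \<Rightarrow> real"
  assumes dim: "DIM('a) \<ge> 3"
    and W: "is_wiener_family W"
    and \<Lambda>_bdd: "bounded \<Lambda>" and \<Lambda>_meas: "\<Lambda> \<in> sets borel"
    and \<beta>: "\<beta> > 0"
    and z: "0 < z" "z \<le> 1"
    and \<epsilon>: "\<epsilon> = 1 \<or> \<epsilon> = -1"
    and U_nonneg: "\<And>x. U x \<ge> 0"
    and U_int: "integrable lborel U"
    and U_sym: "\<And>x. U (- x) = U x"
    and cond: "\<beta> / (2 * pi * \<beta>) powr (real DIM('a) / 2) * (\<integral>x. U x \<partial>lborel)
                 * (\<Sum>l. (real (Suc l)) powr (- real DIM('a) / 2)) \<le> - ln z"
  shows "\<forall>l x \<omega>. l \<ge> 1 \<longrightarrow> x \<in> \<Lambda> \<longrightarrow> \<omega> \<in> cpaths (real l * \<beta>) x x \<longrightarrow>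
           (\<Sum>k. let l' = Suc k in \<integral>\<^sup>+ x'. indicator \<Lambda> x' *
              (\<integral>\<^sup>+ \<omega>'. ennreal (\<bar>z ^ l' * \<epsilon> ^ (l' + 1) / real l'\<bar>
                     * chi \<Lambda> (real l' * \<beta>) \<omega>' * self_factor \<beta> U l' \<omega>'
                     * \<bar>zeta \<beta> U l \<omega> l' \<omega>'\<bar> * exp ((- ln z) * real l'))
                 \<partial>(W (real l' * \<beta>) x' x')) \<partial>lborel)
           \<le> ennreal ((- ln z) * real l)"
proof (intro allI impI)
  fix l :: nat and x :: 'a and \<omega> :: "real \<Rightarrow> 'a"
  assume l: "l \<ge> 1" and x: "x \<in> \<Lambda>" and om: "\<omega> \<in> cpaths (real l * \<beta>) x x"
  have om_m: "\<omega> \<in> borel_measurable borel"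
    by (rule borel_measurable_continuous_onI[OF cpaths_cont[OF om]]) (use \<beta> in simp)
  have Um: "U \<in> borel_measurable borel"
    using borel_measurable_integrable[OF U_int] by simp
  define IU where "IU = (\<integral>x. U x \<partial>lborel)"
  have IU: "(\<integral>\<^sup>+y. ennreal (U y) \<partial>lborel) = ennreal IU"
    unfolding IU_def using nn_integral_eq_integral[OF U_int] U_nonneg by simp
  have IU0: "IU \<ge> 0" unfolding IU_def using U_nonneg by (simp add: integral_nonneg)
  define d where "d = real DIM('a)"
  define A where "A = (2 * pi * \<beta>) powr (- d / 2)"
  define S where "S = (\<Sum>k. real (Suc k) powr (- d / 2))"
  define g where "g k = real l * \<beta> * IU * A * real (Suc k) powr (- d / 2)" for k
  have hk: "heat_kernel (real (Suc k) * \<beta>) (0::'a) = real (Suc k) powr (- d / 2) * A" for k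
  proof -
    have "2 * pi * (real (Suc k) * \<beta>) = real (Suc k) * (2 * pi * \<beta>)" by simp
    then show ?thesis unfolding heat_kernel_def A_def d_def
      using \<beta> by (simp add: powr_mult)
  qed
  have step: "(let l' = Suc k in \<integral>\<^sup>+ x'. indicator \<Lambda> x' *
              (\<integral>\<^sup>+ \<omega>'. ennreal (\<bar>z ^ l' * \<epsilon> ^ (l' + 1) / real l'\<bar>
                     * chi \<Lambda> (real l' * \<beta>) \<omega>' * self_factor \<beta> U l' \<omega>'
                     * \<bar>zeta \<beta> U l \<omega> l' \<omega>'\<bar> * exp ((- ln z) * real l'))
                 \<partial>(W (real l' * \<beta>) x' x')) \<partial>lborel) \<le> ennreal (g k)" for k
  proof -
    have "(let l' = Suc k in \<integral>\<^sup>+ x'. indicator \<Lambda> x' *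
              (\<integral>\<^sup>+ \<omega>'. ennreal (\<bar>z ^ l' * \<epsilon> ^ (l' + 1) / real l'\<bar>
                     * chi \<Lambda> (real l' * \<beta>) \<omega>' * self_factor \<beta> U l' \<omega>'
                     * \<bar>zeta \<beta> U l \<omega> l' \<omega>'\<bar> * exp ((- ln z) * real l'))
                 \<partial>(W (real l' * \<beta>) x' x')) \<partial>lborel)
       \<le> ennreal (real l * \<beta> * heat_kernel (real (Suc k) * \<beta>) (0::'a)) * (\<integral>\<^sup>+y. ennreal (U y) \<partial>lborel)"
      unfolding Let_def by (rule claim[OF W \<beta> z(1) \<epsilon> Um om_m]) simp
    also have "\<dots> = ennreal (g k)"
      unfolding IU hk g_def using \<beta> IU0
      by (simp add: ennreal_mult'[symmetric] heat_kernel_nonneg mult_ac A_def)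
    finally show ?thesis .
  qed
  have sumS: "summable (\<lambda>k. real (Suc k) powr (- d / 2))"
  proof -
    have "- d / 2 < -1" using dim unfolding d_def by simp
    then have "summable (\<lambda>n. real n powr (- d / 2))" by (simp add: summable_real_powr_iff)
    then show ?thesis by (subst summable_Suc_iff)
  qed
  have sg: "summable g" unfolding g_def by (intro summable_mult sumS)
  have g0: "g k \<ge> 0" for k unfolding g_def A_def using \<beta> IU0 l by simp
  have "(\<Sum>k. let l' = Suc k in \<integral>\<^sup>+ x'. indicator \<Lambda> x' *
              (\<integral>\<^sup>+ \<omega>'. ennreal (\<bar>z ^ l' * \<epsilon> ^ (l' + 1) / real l'\<bar>
                     * chi \<Lambda> (real l' * \<beta>) \<omega>' * self_factor \<beta> U l' \<omega>'
                     * \<bar>zeta \<beta> U l \<omega> l' \<omega>'\<bar> * exp ((- ln z) * real l'))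
                 \<partial>(W (real l' * \<beta>) x' x')) \<partial>lborel) \<le> (\<Sum>k. ennreal (g k))"
    by (rule suminf_le[OF step summableI summableI])
  also have "\<dots> = ennreal (\<Sum>k. g k)" by (rule suminf_ennreal2[OF g0 sg])
  also have "\<dots> \<le> ennreal ((- ln z) * real l)"
  proof (rule ennreal_leI)
    have "(\<Sum>k. g k) = real l * (\<beta> * A * IU * S)"
      unfolding g_def S_def using suminf_mult[OF sumS, of "real l * \<beta> * IU * A"]
      by (simp add: mult_ac)
    also have "\<beta> * A * IU * S = \<beta> / (2 * pi * \<beta>) powr (real DIM('a) / 2) * (\<integral>x. U x \<partial>lborel)
                 * (\<Sum>l. (real (Suc l)) powr (- real DIM('a) / 2))"
      unfolding A_def IU_def S_def d_def by (simp add: powr_minus_divide)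
    also have "real l * \<dots> \<le> real l * (- ln z)"
      by (rule mult_left_mono[OF cond]) simp
    finally show "(\<Sum>k. g k) \<le> (- ln z) * real l" by (simp add: mult.commute)
  qed
  finally show "(\<Sum>k. let l' = Suc k in \<integral>\<^sup>+ x'. indicator \<Lambda> x' *
              (\<integral>\<^sup>+ \<omega>'. ennreal (\<bar>z ^ l' * \<epsilon> ^ (l' + 1) / real l'\<bar>
                     * chi \<Lambda> (real l' * \<beta>) \<omega>' * self_factor \<beta> U l' \<omega>'
                     * \<bar>zeta \<beta> U l \<omega> l' \<omega>'\<bar> * exp ((- ln z) * real l'))
                 \<partial>(W (real l' * \<beta>) x' x')) \<partial>lborel) \<le> ennreal ((- ln z) * real l)" .
qed

end
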